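(* For the $2$-state GM+I model on binary 4-taxon trees (the three trees $T_{ab|cd}$, $T_{ac|bd}$, $T_{ad|bc}$ on taxa $a,b,c,d$), the tree parameter is generically identifiable.
   Context: For a binary $n$-taxon tree $T$ (leaves labeled by the taxa, internal vertices of valence 3) with edge set $E$, the $\kappa$-state GM+I model has parameters $\mathbf s=(\delta,\pi_I,\pi_{GM},(M_e)_{e\in E})$: $\delta\in[0,1]$, probability vectors $\pi_I,\pi_{GM}\in[0,1]^\kappa$ ($\pi_{GM}$ the distribution at a chosen root $r$), and $\kappa\times\kappa$ Markov matrices $M_e$ for edges $e$ directed away from $r$. These form a stochastic parameter space $S_T\subseteq\mathbb R^N$, $N=2\kappa-1+|E|\kappa(\kappa-1)$. The joint leaf distribution $P=\phi_T(\mathbf s)$ has entries $p_{i_1\dots i_n}=\delta\,\epsilon(i_1,\dots,i_n)\pi_I(i_1)+(1-\delta)\sum_{(j_v)}\pi_{GM}(j_r)\prod_{e=(u\to w)}M_e(j_u,j_w)$, with $\epsilon=1$ if all indices equal and $0$ otherwise, the sum over all state assignments to vertices extending the leaf states. The tree parameter is generically identifiable for a collection of trees if for each tree $T$ there is a proper algebraic variety $X_T\subsetneq\mathbb C^N$ such that whenever $P\in\bigcup_T\phi_T(S_T\setminus X_T)$, there is a unique tree $T$ with $P\in\phi_T(S_T\setminus X_T)$. *)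

theory Defs
  imports Complex_Main
begin

text \<open>Taxa a,b,c,d are numbered 0,1,2,3; states are 0,1 (kappa = 2).
  Each quartet tree has two internal vertices u, v; the root r is u.
  For the split xy|zw the (directed) edges are
  e0 = u->x, e1 = u->y, e2 = u->v, e3 = v->z, e4 = v->w.\<close>

datatype quartet = AB_CD | AC_BD | AD_BC

text \<open>Leaf ordering (x,y,z,w) of the split xy|zw.\<close>
fun qleaves :: "quartet \<Rightarrow> nat list" where
  "qleaves AB_CD = [0,1,2,3]"
| "qleaves AC_BD = [0,2,1,3]"
| "qleaves AD_BC = [0,3,1,2]"

text \<open>Parameter space dimension N = 2 kappa - 1 + |E| kappa (kappa - 1) = 3 + 5*2 = 13.
  Coordinates of a parameter vector s (entries s i for i < 13; s i = 0 for i >= 13):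
  s 0 = delta, s 1 = pi_I(0), s 2 = pi_GM(0),
  s (3 + 2e) = M_e(0,1), s (4 + 2e) = M_e(1,0) for edges e = 0..4.
  The remaining entries are determined by the stochastic constraints.\<close>

definition gmiN :: nat where "gmiN = 13"

definition pvec :: "real \<Rightarrow> nat \<Rightarrow> real" where
  "pvec p k = (if k = 0 then p else 1 - p)"

definition emat :: "(nat \<Rightarrow> real) \<Rightarrow> nat \<Rightarrow> nat \<Rightarrow> nat \<Rightarrow> real" where
  "emat s e i j = (if i = j then 1 - s (3 + 2 * e + i) else s (3 + 2 * e + i))"

definition gmi_params :: "(nat \<Rightarrow> real) set" where
  "gmi_params = {s. (\<forall>i<gmiN. 0 \<le> s i \<and> s i \<le> 1) \<and> (\<forall>i\<ge>gmiN. s i = 0)}"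

text \<open>The parametrization phi_T: joint distribution of leaf states (i_a,i_b,i_c,i_d),
  set to 0 outside {0,1}^4.\<close>
definition gmi_phi :: "quartet \<Rightarrow> (nat \<Rightarrow> real) \<Rightarrow> (nat \<Rightarrow> nat \<Rightarrow> nat \<Rightarrow> nat \<Rightarrow> real)" where
  "gmi_phi T s i1 i2 i3 i4 =
     (if i1 < 2 \<and> i2 < 2 \<and> i3 < 2 \<and> i4 < 2 then
        (let st = (\<lambda>k. [i1, i2, i3, i4] ! k); L = qleaves T;
             ix = st (L ! 0); iy = st (L ! 1); iz = st (L ! 2); iw = st (L ! 3) in
         s 0 * (if i1 = i2 \<and> i2 = i3 \<and> i3 = i4 then 1 else 0) * pvec (s 1) i1
         + (1 - s 0) * (\<Sum>ju<2. \<Sum>jv<2.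
              pvec (s 2) ju * emat s 0 ju ix * emat s 1 ju iy * emat s 2 ju jv
                * emat s 3 jv iz * emat s 4 jv iw))
      else 0)"

inductive_set polyfun :: "nat \<Rightarrow> ((nat \<Rightarrow> complex) \<Rightarrow> complex) set" for N :: nat where
  pconst: "(\<lambda>x. c) \<in> polyfun N"
| pvar: "i < N \<Longrightarrow> (\<lambda>x. x i) \<in> polyfun N"
| padd: "f \<in> polyfun N \<Longrightarrow> g \<in> polyfun N \<Longrightarrow> (\<lambda>x. f x + g x) \<in> polyfun N"
| pmult: "f \<in> polyfun N \<Longrightarrow> g \<in> polyfun N \<Longrightarrow> (\<lambda>x. f x * g x) \<in> polyfun N"

definition algebraic_variety :: "nat \<Rightarrow> (nat \<Rightarrow> complex) set \<Rightarrow> bool" where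
  "algebraic_variety N X \<longleftrightarrow> (\<exists>F \<subseteq> polyfun N. X = {x. \<forall>f\<in>F. f x = 0})"

text \<open>A proper variety: not all of C^N (vectors are nat-indexed, only coordinates < N matter).\<close>
definition proper_variety :: "nat \<Rightarrow> (nat \<Rightarrow> complex) set \<Rightarrow> bool" where
  "proper_variety N X \<longleftrightarrow> algebraic_variety N X \<and> (\<exists>x. (\<forall>i\<ge>N. x i = 0) \<and> x \<notin> X)"

definition avoid :: "(nat \<Rightarrow> real) set \<Rightarrow> (nat \<Rightarrow> complex) set \<Rightarrow> (nat \<Rightarrow> real) set" where
  "avoid S X = {s \<in> S. (\<lambda>i. complex_of_real (s i)) \<notin> X}"

definition gmi_quartet_tree_generically_identifiable :: bool where
  "gmi_quartet_tree_generically_identifiable \<longleftrightarrow>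
     (\<exists>X :: quartet \<Rightarrow> (nat \<Rightarrow> complex) set.
        (\<forall>T. proper_variety gmiN (X T)) \<and>
        (\<forall>P. P \<in> (\<Union>T. gmi_phi T ` avoid gmi_params (X T)) \<longrightarrow>
             (\<exists>!T. P \<in> gmi_phi T ` avoid gmi_params (X T))))"

end

theory Submission
  imports Defs
begin

definition pv :: "'a::comm_ring_1 \<Rightarrow> nat \<Rightarrow> 'a" where
  "pv p k = (if k = 0 then p else 1 - p)"

definition em :: "(nat \<Rightarrow> 'a::comm_ring_1) \<Rightarrow> nat \<Rightarrow> nat \<Rightarrow> nat \<Rightarrow> 'a" where
  "em s e i j = (if i = j then 1 - s (3 + 2 * e + i) else s (3 + 2 * e + i))"

definition phiG :: "quartet \<Rightarrow> (nat \<Rightarrow> 'a::comm_ring_1) \<Rightarrow> nat \<Rightarrow> nat \<Rightarrow> nat \<Rightarrow> nat \<Rightarrow> 'a" where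
  "phiG T s i1 i2 i3 i4 =
     (if i1 < 2 \<and> i2 < 2 \<and> i3 < 2 \<and> i4 < 2 then
        (let st = (\<lambda>k. [i1, i2, i3, i4] ! k); L = qleaves T;
             ix = st (L ! 0); iy = st (L ! 1); iz = st (L ! 2); iw = st (L ! 3) in
         s 0 * (if i1 = i2 \<and> i2 = i3 \<and> i3 = i4 then 1 else 0) * pv (s 1) i1
         + (1 - s 0) * (\<Sum>ju<2. \<Sum>jv<2.
              pv (s 2) ju * em s 0 ju ix * em s 1 ju iy * em s 2 ju jv
                * em s 3 jv iz * em s 4 jv iw))
      else 0)"

lemma gmi_phi_eq: "gmi_phi T s = phiG T s"
  unfolding gmi_phi_def phiG_def pvec_def pv_def emat_def em_def by (intro ext) simp

lemma pv_of_real: "pv (of_real p :: complex) k = of_real (pv p k)"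
  unfolding pv_def by simp
lemma em_of_real: "em (\<lambda>i. of_real (s i) :: complex) e i j = of_real (em s e i j)"
  unfolding em_def by simp

lemma phiG_of_real:
  "phiG T (\<lambda>i. of_real (s i) :: complex) a b c d = of_real (phiG T s a b c d)"
  unfolding phiG_def Let_def by (simp add: of_real_sum pv_of_real em_of_real)

definition flat :: "quartet \<Rightarrow> (nat \<Rightarrow> nat \<Rightarrow> nat \<Rightarrow> nat \<Rightarrow> 'a) \<Rightarrow> nat \<Rightarrow> nat \<Rightarrow> nat \<Rightarrow> nat \<Rightarrow> 'a" where
  "flat T P a b c d = (case T of AB_CD \<Rightarrow> P a b c d | AC_BD \<Rightarrow> P a c b d | AD_BC \<Rightarrow> P a c d b)"

definition det3 :: "'a::comm_ring_1 \<Rightarrow> 'a \<Rightarrow> 'a \<Rightarrow> 'a \<Rightarrow> 'a \<Rightarrow> 'a \<Rightarrow> 'a \<Rightarrow> 'a \<Rightarrow> 'a \<Rightarrow> 'a" where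
  "det3 a b c d e f g h i = a*(e*i-f*h)-b*(d*i-f*g)+c*(d*h-e*g)"

definition minor :: "quartet \<Rightarrow> (nat \<Rightarrow> nat \<Rightarrow> nat \<Rightarrow> nat \<Rightarrow> 'a::comm_ring_1) \<Rightarrow> 'a" where
  "minor T P = det3
     (flat T P 0 0 0 1) (flat T P 0 0 1 0) (flat T P 0 0 1 1)
     (flat T P 0 1 0 1) (flat T P 0 1 1 0) (flat T P 0 1 1 1)
     (flat T P 1 0 0 1) (flat T P 1 0 1 0) (flat T P 1 0 1 1)"

definition LL :: "(nat \<Rightarrow> 'a::comm_ring_1) \<Rightarrow> nat \<Rightarrow> nat \<Rightarrow> nat \<Rightarrow> 'a" where
  "LL s ju a b = pv (s 2) ju * em s 0 ju a * em s 1 ju b"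
definition RR :: "(nat \<Rightarrow> 'a::comm_ring_1) \<Rightarrow> nat \<Rightarrow> nat \<Rightarrow> nat \<Rightarrow> 'a" where
  "RR s ju c d = (\<Sum>jv<2. em s 2 ju jv * em s 3 jv c * em s 4 jv d)"

lemma flat_gm:
  assumes "a < 2" "b < 2" "c < 2" "d < 2" "\<not> (a = b \<and> b = c \<and> c = d)"
  shows "flat T (phiG T s) a b c d = (1 - s 0) * (LL s 0 a b * RR s 0 c d + LL s 1 a b * RR s 1 c d)"
proof -
  have e: "(\<Sum>ju<2. \<Sum>jv<2. pv (s 2) ju * em s 0 ju a * em s 1 ju b * em s 2 ju jv
                * em s 3 jv c * em s 4 jv d) = LL s 0 a b * RR s 0 c d + LL s 1 a b * RR s 1 c d"
    unfolding LL_def RR_def by (simp add: numeral_2_eq_2 algebra_simps)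
  show ?thesis
    using assms e by (cases T) (auto simp: flat_def phiG_def Let_def)
qed

lemma det3_rank2:
  fixes k :: "'a::comm_ring_1"
  shows "det3 (k*(a1*b1+a1'*b1')) (k*(a1*b2+a1'*b2')) (k*(a1*b3+a1'*b3'))
              (k*(a2*b1+a2'*b1')) (k*(a2*b2+a2'*b2')) (k*(a2*b3+a2'*b3'))
              (k*(a3*b1+a3'*b1')) (k*(a3*b2+a3'*b2')) (k*(a3*b3+a3'*b3')) = 0"
  unfolding det3_def by (simp add: algebra_simps)

lemma minor_vanish: "minor T (phiG T s) = 0"
  unfolding minor_def by (simp add: flat_gm det3_rank2)


lemma psub: "f \<in> polyfun N \<Longrightarrow> g \<in> polyfun N \<Longrightarrow> (\<lambda>x. f x - g x) \<in> polyfun N"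
proof -
  assume f: "f \<in> polyfun N" and g: "g \<in> polyfun N"
  have "(\<lambda>x. f x + (\<lambda>x. -1) x * g x) \<in> polyfun N"
    by (intro polyfun.padd polyfun.pmult polyfun.pconst f g)
  then show ?thesis by simp
qed

lemma psum: "finite A \<Longrightarrow> (\<And>k. k \<in> A \<Longrightarrow> (\<lambda>x. f k x) \<in> polyfun N) \<Longrightarrow> (\<lambda>x. \<Sum>k\<in>A. f k x) \<in> polyfun N"
proof (induction A rule: finite_induct)
  case empty
  then show ?case using polyfun.pconst[of 0 N] by simp
next
  case (insert a A)
  have "(\<lambda>x. f a x + (\<Sum>k\<in>A. f k x)) \<in> polyfun N"
    using insert by (intro polyfun.padd) auto
  then show ?case using insert by simp
qed

lemma pv_poly: "i < N \<Longrightarrow> (\<lambda>x. pv (x i) k) \<in> polyfun N"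
  unfolding pv_def by (cases "k = 0") (auto intro: polyfun.intros psub)

lemma em_poly: "3 + 2 * e + i < N \<Longrightarrow> (\<lambda>x. em x e i j) \<in> polyfun N"
  unfolding em_def by (cases "i = j") (auto intro: polyfun.intros psub)

lemma gm_poly:
  assumes "ix < 2" "iy < 2" "iz < 2" "iw < 2"
  shows "(\<lambda>x. x 0 * c * pv (x 1) a + (1 - x 0) * (\<Sum>ju<2. \<Sum>jv<2.
              pv (x 2) ju * em x 0 ju ix * em x 1 ju iy * em x 2 ju jv
                * em x 3 jv iz * em x 4 jv iw)) \<in> polyfun 13"
  by (intro polyfun.padd polyfun.pmult psub psum polyfun.pconst polyfun.pvar pv_poly em_poly finite_lessThan;
      simp)

lemma phiG_poly: "(\<lambda>x. phiG T x a b c d) \<in> polyfun 13"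
proof (cases "a < 2 \<and> b < 2 \<and> c < 2 \<and> d < 2")
  case True
  have l: "[a,b,c,d] ! (qleaves T ! k) < 2" if "k < 4" for k
    using True that by (cases T; cases k; auto simp: numeral_eq_Suc less_Suc_eq)
  show ?thesis
    unfolding phiG_def Let_def if_P[OF True]
    by (rule gm_poly; rule l; simp)
next
  case False
  show ?thesis unfolding phiG_def if_not_P[OF False] by (rule polyfun.pconst)
qed

lemma minor_poly: "(\<lambda>x. minor T' (phiG T x)) \<in> polyfun 13"
  unfolding minor_def det3_def flat_def
  by (cases T') (simp_all; intro phiG_poly padd polyfun.pmult psub)+

lemma minor_of_real: "minor T' (phiG T (\<lambda>i. of_real (s i) :: complex)) = of_real (minor T' (phiG T s))"
  unfolding minor_def det3_def flat_def by (cases T') (simp_all add: phiG_of_real)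

fun o1 :: "quartet \<Rightarrow> quartet" where
  "o1 AB_CD = AC_BD" | "o1 AC_BD = AB_CD" | "o1 AD_BC = AB_CD"
fun o2 :: "quartet \<Rightarrow> quartet" where
  "o2 AB_CD = AD_BC" | "o2 AC_BD = AD_BC" | "o2 AD_BC = AC_BD"

lemma other: "T' \<noteq> T \<Longrightarrow> T' = o1 T \<or> T' = o2 T"
  by (cases T; cases T') auto

definition s0 :: "nat \<Rightarrow> real" where
  "s0 i = (if i < 13 then [0, -2, 2, 1, -1, 2, 0, 0, 3, -1, 0, 2, -2] ! i else 0)"

lemma s0_nz: "minor (o1 T) (phiG T s0) * minor (o2 T) (phiG T s0) \<noteq> 0"
  by (cases T) (simp_all add: minor_def det3_def flat_def phiG_def pv_def em_def s0_def numeral_2_eq_2)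

definition XX :: "quartet \<Rightarrow> (nat \<Rightarrow> complex) set" where
  "XX T = {x. \<forall>f\<in>{\<lambda>x. minor (o1 T) (phiG T x) * minor (o2 T) (phiG T x)}. f x = 0}"

lemma XX_proper: "proper_variety gmiN (XX T)"
  unfolding proper_variety_def algebraic_variety_def
proof (intro conjI exI)
  show "{\<lambda>x. minor (o1 T) (phiG T x) * minor (o2 T) (phiG T x)} \<subseteq> polyfun gmiN"
    by (simp add: gmiN_def polyfun.pmult minor_poly)
  show "XX T = {x. \<forall>f\<in>{\<lambda>x. minor (o1 T) (phiG T x) * minor (o2 T) (phiG T x)}. f x = 0}"
    by (simp add: XX_def)
  show "\<forall>i\<ge>gmiN. (\<lambda>i. complex_of_real (s0 i)) i = 0" by (simp add: gmiN_def s0_def)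
  show "(\<lambda>i. complex_of_real (s0 i)) \<notin> XX T"
    using s0_nz[of T] by (simp add: XX_def minor_of_real)
qed

theorem corollary7:
  shows "gmi_quartet_tree_generically_identifiable"
  unfolding gmi_quartet_tree_generically_identifiable_def
proof (intro exI conjI allI impI)
  show "proper_variety gmiN (XX T)" for T by (rule XX_proper)
  fix P assume "P \<in> (\<Union>T. gmi_phi T ` avoid gmi_params (XX T))"
  then obtain T s where s: "s \<in> avoid gmi_params (XX T)" and P: "P = gmi_phi T s" by blast
  show "\<exists>!T. P \<in> gmi_phi T ` avoid gmi_params (XX T)"
  proof (rule ex1I)
    show "P \<in> gmi_phi T ` avoid gmi_params (XX T)" using s P by blast
    fix T' assume "P \<in> gmi_phi T' ` avoid gmi_params (XX T')"
    then obtain s' where P': "P = gmi_phi T' s'" by blast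
    show "T' = T"
    proof (rule ccontr)
      assume ne: "T' \<noteq> T"
      have "(\<lambda>i. complex_of_real (s i)) \<notin> XX T" using s by (simp add: avoid_def)
      then have "minor (o1 T) (phiG T s) * minor (o2 T) (phiG T s) \<noteq> 0"
        by (simp add: XX_def minor_of_real)
      then have "minor T' (phiG T s) \<noteq> 0" using other[OF ne] by auto
      moreover have "minor T' (phiG T s) = minor T' (phiG T' s')"
        using P P' by (simp add: gmi_phi_eq)
      ultimately show False by (simp add: minor_vanish)
    qed
  qed
qed

end
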